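(* Let $T\ge 2$, $U$ a finite set of men and $W_1\subseteq W_2\subseteq\cdots\subseteq W_T$ finite sets of women, each man having a strict total order over $W_T$ and each woman a strict total order over $U$. Let $\Delta_t$ denote the set of stable matchings of $(U,W_t)$. Let $(M_1,\dots,M_T)\in\prod_{t=1}^T\Delta_t$ and let $M_1'\in\Delta_1$ be such that $M_1'$ men-dominates $M_1$. Then there exists $(M_2',\dots,M_T')\in\prod_{t=2}^T\Delta_t$ such that $\sum_{t=1}^{T-1}|M_t'\setminus M_{t+1}'|\le\sum_{t=1}^{T-1}|M_t\setminus M_{t+1}|$.
   Context: A matching is a set of man–woman pairs with each person in at most one pair; preferences in a sub-instance are restrictions of the given ones. A blocking pair of $M$ is a pair $(u,w)\notin M$ with ($u$ unmatched or preferring $w$ to his partner) and ($w$ unmatched or preferring $u$ to her partner); stable means no blocking pair. $M$ men-dominates $M'$ (both stable matchings of the same instance) if every man's partner in $M$ is at least as good for him as his partner in $M'$. *)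

theory Defs
  imports Main
begin

text \<open>Matchings are sets of (man, woman) pairs.  A preference of man u is a strict
relation PM u, where (w, w') \<in> PM u means that u prefers w to w'; similarly PW w for
woman w over men.\<close>

definition is_matching :: "'m set \<Rightarrow> 'w set \<Rightarrow> ('m \<times> 'w) set \<Rightarrow> bool" where
  "is_matching U W M \<longleftrightarrow> M \<subseteq> U \<times> W \<and>
     (\<forall>u w w'. (u, w) \<in> M \<longrightarrow> (u, w') \<in> M \<longrightarrow> w = w') \<and>
     (\<forall>u u' w. (u, w) \<in> M \<longrightarrow> (u', w) \<in> M \<longrightarrow> u = u')"

definition blocking_pair ::
  "('m \<Rightarrow> ('w \<times> 'w) set) \<Rightarrow> ('w \<Rightarrow> ('m \<times> 'm) set) \<Rightarrow> ('m \<times> 'w) set \<Rightarrow> 'm \<Rightarrow> 'w \<Rightarrow> bool" where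
  "blocking_pair PM PW M u w \<longleftrightarrow> (u, w) \<notin> M \<and>
     ((\<forall>w'. (u, w') \<notin> M) \<or> (\<exists>w'. (u, w') \<in> M \<and> (w, w') \<in> PM u)) \<and>
     ((\<forall>u'. (u', w) \<notin> M) \<or> (\<exists>u'. (u', w) \<in> M \<and> (u, u') \<in> PW w))"

definition stable_matching ::
  "'m set \<Rightarrow> 'w set \<Rightarrow> ('m \<Rightarrow> ('w \<times> 'w) set) \<Rightarrow> ('w \<Rightarrow> ('m \<times> 'm) set) \<Rightarrow> ('m \<times> 'w) set \<Rightarrow> bool" where
  "stable_matching U W PM PW M \<longleftrightarrow> is_matching U W M \<and>
     \<not> (\<exists>u\<in>U. \<exists>w\<in>W. blocking_pair PM PW M u w)"

definition men_dominates :: "'m set \<Rightarrow> ('m \<Rightarrow> ('w \<times> 'w) set) \<Rightarrow> ('m \<times> 'w) set \<Rightarrow> ('m \<times> 'w) set \<Rightarrow> bool" where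
  "men_dominates U PM M' M \<longleftrightarrow>
     (\<forall>u\<in>U. \<forall>w. (u, w) \<in> M \<longrightarrow> (\<exists>w'. (u, w') \<in> M' \<and> (w' = w \<or> (w', w) \<in> PM u)))"

end

theory Submission
  imports Defs
begin

definition Pset :: "('m \<Rightarrow> ('w \<times> 'w) set) \<Rightarrow> ('m \<times> 'w) set \<Rightarrow> ('m \<times> 'w) set \<Rightarrow> 'm set" where
  "Pset PM A B = {u. \<exists>w. (u, w) \<in> A \<and> (\<forall>w'. (u, w') \<in> B \<longrightarrow> (w, w') \<in> PM u)}"

definition mjoin :: "('m \<Rightarrow> ('w \<times> 'w) set) \<Rightarrow> ('m \<times> 'w) set \<Rightarrow> ('m \<times> 'w) set \<Rightarrow> ('m \<times> 'w) set" where
  "mjoin PM A B = {p \<in> A. fst p \<in> Pset PM A B} \<union> {p \<in> B. fst p \<notin> Pset PM A B}"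

fun seqM :: "('m \<Rightarrow> ('w \<times> 'w) set) \<Rightarrow> ('m \<times> 'w) set \<Rightarrow> (nat \<Rightarrow> ('m \<times> 'w) set) \<Rightarrow> nat \<Rightarrow> ('m \<times> 'w) set" where
  "seqM PM A M 0 = A"
| "seqM PM A M (Suc n) = mjoin PM (seqM PM A M n) (M (Suc (Suc n)))"

lemma stable_noblock:
  assumes "stable_matching U W PM PW M" "u \<in> U" "w \<in> W" "(u, w) \<notin> M"
    "\<forall>w'. (u, w') \<in> M \<longrightarrow> (w, w') \<in> PM u"
    "\<forall>u'. (u', w) \<in> M \<longrightarrow> (u, u') \<in> PW w"
  shows False
proof -
  have "blocking_pair PM PW M u w"
    unfolding blocking_pair_def using assms(4,5,6) by blast
  then show False using assms(1-3) unfolding stable_matching_def by blast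
qed

lemma stable_sub: "stable_matching U W PM PW M \<Longrightarrow> M \<subseteq> U \<times> W"
  unfolding stable_matching_def is_matching_def by blast

lemma stable_men: "stable_matching U W PM PW M \<Longrightarrow> (u, w) \<in> M \<Longrightarrow> (u, w') \<in> M \<Longrightarrow> w = w'"
  unfolding stable_matching_def is_matching_def by blast

lemma stable_women: "stable_matching U W PM PW M \<Longrightarrow> (u, w) \<in> M \<Longrightarrow> (u', w) \<in> M \<Longrightarrow> u = u'"
  unfolding stable_matching_def is_matching_def by blast

locale prefs =
  fixes U :: "'m set" and X :: "'w set" and PM :: "'m \<Rightarrow> ('w \<times> 'w) set"
    and PW :: "'w \<Rightarrow> ('m \<times> 'm) set"
  assumes finU: "finite U"
  and pm_irr: "u \<in> U \<Longrightarrow> (a, a) \<notin> PM u"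
  and pm_trans: "u \<in> U \<Longrightarrow> (a, b) \<in> PM u \<Longrightarrow> (b, c) \<in> PM u \<Longrightarrow> (a, c) \<in> PM u"
  and pm_tot: "u \<in> U \<Longrightarrow> a \<in> X \<Longrightarrow> b \<in> X \<Longrightarrow> a \<noteq> b \<Longrightarrow> (a, b) \<in> PM u \<or> (b, a) \<in> PM u"
  and pw_irr: "w \<in> X \<Longrightarrow> (x, x) \<notin> PW w"
  and pw_trans: "w \<in> X \<Longrightarrow> (x, y) \<in> PW w \<Longrightarrow> (y, z) \<in> PW w \<Longrightarrow> (x, z) \<in> PW w"
  and pw_tot: "w \<in> X \<Longrightarrow> x \<in> U \<Longrightarrow> y \<in> U \<Longrightarrow> x \<noteq> y \<Longrightarrow> (x, y) \<in> PW w \<or> (y, x) \<in> PW w"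
begin

context
  fixes Wa Wb A B
  assumes WaWb: "Wa \<subseteq> Wb" and WbX: "Wb \<subseteq> X" and finWb: "finite Wb"
    and stA: "stable_matching U Wa PM PW A" and stB: "stable_matching U Wb PM PW B"
begin

lemma L1:
  assumes "u \<in> Pset PM A B" "(u, w) \<in> A"
  shows "\<exists>u''. (u'', w) \<in> B \<and> u'' \<in> Pset PM A B"
proof -
  have uU: "u \<in> U" and wa: "w \<in> Wa" using assms(2) stable_sub[OF stA] by auto
  obtain w0 where w0: "(u, w0) \<in> A" "\<forall>w'. (u, w') \<in> B \<longrightarrow> (w0, w') \<in> PM u"
    using assms(1) unfolding Pset_def by blast
  have "w0 = w" using stable_men[OF stA w0(1) assms(2)] .
  with w0 have mB: "\<forall>w'. (u, w') \<in> B \<longrightarrow> (w, w') \<in> PM u" by simp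
  have nB: "(u, w) \<notin> B" using mB pm_irr[OF uU] by blast
  have "\<not> (\<forall>u'. (u', w) \<in> B \<longrightarrow> (u, u') \<in> PW w)"
    using stable_noblock[OF stB uU _ nB mB] wa WaWb by blast
  then obtain u'' where u'': "(u'', w) \<in> B" "(u, u'') \<notin> PW w" by blast
  have u''U: "u'' \<in> U" using u''(1) stable_sub[OF stB] by auto
  have ne: "u'' \<noteq> u" using u''(1) nB by blast
  have wX: "w \<in> X" using wa WaWb WbX by blast
  have pref: "(u'', u) \<in> PW w" using pw_tot[OF wX u''U uU ne] u''(2) by blast
  have "u'' \<in> Pset PM A B"
  proof (rule ccontr)
    assume np: "u'' \<notin> Pset PM A B"
    have nA: "(u'', w) \<notin> A" using stable_women[OF stA assms(2)] ne by blast
    have mA: "\<forall>w'. (u'', w') \<in> A \<longrightarrow> (w, w') \<in> PM u''"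
    proof (intro allI impI)
      fix w1 assume w1: "(u'', w1) \<in> A"
      have "\<not> (\<forall>w'. (u'', w') \<in> B \<longrightarrow> (w1, w') \<in> PM u'')" using np w1 unfolding Pset_def by blast
      then obtain w2 where "(u'', w2) \<in> B" "(w1, w2) \<notin> PM u''" by blast
      then have "(w1, w) \<notin> PM u''" using stable_men[OF stB u''(1)] by blast
      moreover have "w1 \<noteq> w" using w1 nA by blast
      moreover have "w1 \<in> X" using w1 stable_sub[OF stA] WaWb WbX by blast
      ultimately show "(w, w1) \<in> PM u''" using pm_tot[OF u''U _ wX] by blast
    qed
    have wA: "\<forall>u'. (u', w) \<in> A \<longrightarrow> (u'', u') \<in> PW w"
      using stable_women[OF stA assms(2)] pref by blast
    show False using stable_noblock[OF stA u''U wa nA mA wA] .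
  qed
  then show ?thesis using u''(1) by blast
qed

lemma L2:
  "{w. \<exists>u\<in>Pset PM A B. (u, w) \<in> A} = {w. \<exists>u\<in>Pset PM A B. (u, w) \<in> B}"
proof -
  let ?P = "Pset PM A B"
  let ?AP = "{w. \<exists>u\<in>?P. (u, w) \<in> A}" and ?BP = "{w. \<exists>u\<in>?P. (u, w) \<in> B}"
  have sub: "?AP \<subseteq> ?BP" using L1 by blast
  have finB: "finite B" using stable_sub[OF stB] finU finWb
    by (meson finite_SigmaI finite_subset)
  have finA: "finite A" using stable_sub[OF stA] finU finWb WaWb
    by (meson finite_SigmaI finite_subset)
  have PU: "?P \<subseteq> U" using stable_sub[OF stA] unfolding Pset_def by blast
  have finBP: "finite ?BP"
  proof -
    have "?BP \<subseteq> snd ` B" by force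
    then show ?thesis using finB finite_subset by blast
  qed
  have c1: "card ?BP \<le> card ?P"
  proof -
    have "?BP = snd ` (B \<inter> (?P \<times> UNIV))" by force
    then have "card ?BP \<le> card (B \<inter> (?P \<times> UNIV))" by (simp add: card_image_le finB)
    also have "card (B \<inter> (?P \<times> UNIV)) = card (fst ` (B \<inter> (?P \<times> UNIV)))"
      by (rule card_image[symmetric]) (auto simp: inj_on_def dest: stable_men[OF stB])
    also have "\<dots> \<le> card ?P" by (rule card_mono) (use PU finU finite_subset in auto)
    finally show ?thesis .
  qed
  have c2: "card ?P \<le> card ?AP"
  proof -
    have e: "?P = fst ` (A \<inter> (?P \<times> UNIV))" unfolding Pset_def by force
    have "card ?P \<le> card (A \<inter> (?P \<times> UNIV))" by (subst e) (simp add: card_image_le finA)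
    also have "card (A \<inter> (?P \<times> UNIV)) = card (snd ` (A \<inter> (?P \<times> UNIV)))"
      by (rule card_image[symmetric]) (auto simp: inj_on_def dest: stable_women[OF stA])
    also have "snd ` (A \<inter> (?P \<times> UNIV)) = ?AP" by force
    finally show ?thesis .
  qed
  show ?thesis using card_seteq[OF finBP sub] c1 c2 by linarith
qed

lemma L3: "stable_matching U Wb PM PW (mjoin PM A B)"
proof -
  let ?P = "Pset PM A B" and ?J = "mjoin PM A B"
  have sub: "?J \<subseteq> U \<times> Wb" using stable_sub[OF stA] stable_sub[OF stB] WaWb
    unfolding mjoin_def by auto
  have men: "\<forall>u w w'. (u, w) \<in> ?J \<longrightarrow> (u, w') \<in> ?J \<longrightarrow> w = w'"
    unfolding mjoin_def using stable_men[OF stA] stable_men[OF stB] by auto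
  have women: "\<forall>u u' w. (u, w) \<in> ?J \<longrightarrow> (u', w) \<in> ?J \<longrightarrow> u = u'"
  proof (intro allI impI)
    fix u u' w assume a: "(u, w) \<in> ?J" "(u', w) \<in> ?J"
    have x: False if h: "(u1, w) \<in> A" "u1 \<in> ?P" "(u2, w) \<in> B" "u2 \<notin> ?P" for u1 u2
    proof -
      obtain u4 where "(u4, w) \<in> B" "u4 \<in> ?P" using L1 h(1,2) by blast
      then show False using stable_women[OF stB _ h(3)] h(4) by blast
    qed
    show "u = u'" using a x stable_women[OF stA] stable_women[OF stB]
      unfolding mjoin_def by auto
  qed
  have nb: "\<not> (\<exists>u\<in>U. \<exists>w\<in>Wb. blocking_pair PM PW ?J u w)"
  proof
    assume "\<exists>u\<in>U. \<exists>w\<in>Wb. blocking_pair PM PW ?J u w"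
    then obtain u w where uU: "u \<in> U" and wb: "w \<in> Wb" and bp: "blocking_pair PM PW ?J u w" by blast
    have nJ: "(u, w) \<notin> ?J" using bp unfolding blocking_pair_def by blast
    have manJ: "\<forall>w'. (u, w') \<in> ?J \<longrightarrow> (w, w') \<in> PM u"
      using bp men unfolding blocking_pair_def by blast
    have womanJ: "\<forall>u'. (u', w) \<in> ?J \<longrightarrow> (u, u') \<in> PW w"
      using bp women unfolding blocking_pair_def by blast
    have manB: "\<forall>w'. (u, w') \<in> B \<longrightarrow> (w, w') \<in> PM u"
    proof (intro allI impI)
      fix w' assume w': "(u, w') \<in> B"
      show "(w, w') \<in> PM u"
      proof (cases "u \<in> ?P")
        case True
        then obtain w1 where "(u, w1) \<in> A" "\<forall>w'. (u, w') \<in> B \<longrightarrow> (w1, w') \<in> PM u"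
          unfolding Pset_def by blast
        moreover have "(u, w1) \<in> ?J" using calculation True unfolding mjoin_def by auto
        ultimately show ?thesis using manJ w' pm_trans[OF uU] by blast
      next
        case False
        then show ?thesis using manJ w' unfolding mjoin_def by auto
      qed
    qed
    have nB: "(u, w) \<notin> B" using manB pm_irr[OF uU] by blast
    have "\<not> (\<forall>u'. (u', w) \<in> B \<longrightarrow> (u, u') \<in> PW w)"
      using stable_noblock[OF stB uU wb nB manB] by blast
    then obtain u'' where u'': "(u'', w) \<in> B" "(u, u'') \<notin> PW w" by blast
    show False
    proof (cases "u'' \<in> ?P")
      case False
      then have "(u'', w) \<in> ?J" using u''(1) unfolding mjoin_def by auto
      then show False using womanJ u''(2) by blast
    next
      case True
      then have "w \<in> {w. \<exists>u\<in>?P. (u, w) \<in> B}" using u''(1) by blast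
      then obtain u3 where u3: "u3 \<in> ?P" "(u3, w) \<in> A" using L2 by blast
      have u3J: "(u3, w) \<in> ?J" using u3 unfolding mjoin_def by auto
      have pw: "(u, u3) \<in> PW w" using womanJ u3J by blast
      have wa: "w \<in> Wa" using u3(2) stable_sub[OF stA] by blast
      have manA: "\<forall>w'. (u, w') \<in> A \<longrightarrow> (w, w') \<in> PM u"
      proof (intro allI impI)
        fix w' assume w': "(u, w') \<in> A"
        show "(w, w') \<in> PM u"
        proof (cases "u \<in> ?P")
          case True
          then show ?thesis using manJ w' unfolding mjoin_def by auto
        next
          case False
          then obtain w'' where w'': "(u, w'') \<in> B" "(w', w'') \<notin> PM u"
            using w' unfolding Pset_def by blast
          have "(u, w'') \<in> ?J" using w''(1) False unfolding mjoin_def by auto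
          then have h: "(w, w'') \<in> PM u" using manJ by blast
          show ?thesis
          proof (cases "w' = w''")
            case True then show ?thesis using h by simp
          next
            case False
            have "w' \<in> X" "w'' \<in> X" using w' w''(1) stable_sub[OF stA] stable_sub[OF stB] WaWb WbX by auto
            then have "(w'', w') \<in> PM u" using pm_tot[OF uU _ _ False] w''(2) by blast
            then show ?thesis using h pm_trans[OF uU] by blast
          qed
        qed
      qed
      have nA: "(u, w) \<notin> A" using manA pm_irr[OF uU] by blast
      have womA: "\<forall>u'. (u', w) \<in> A \<longrightarrow> (u, u') \<in> PW w"
        using stable_women[OF stA u3(2)] pw by blast
      show False using stable_noblock[OF stA uU wa nA manA womA] .
    qed
  qed
  show ?thesis unfolding stable_matching_def is_matching_def using sub men women nb by blast
qed

lemma L5: "men_dominates U PM (mjoin PM A B) B"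
  unfolding men_dominates_def
proof (intro ballI allI impI)
  fix u w assume uw: "(u, w) \<in> B"
  show "\<exists>w'. (u, w') \<in> mjoin PM A B \<and> (w' = w \<or> (w', w) \<in> PM u)"
  proof (cases "u \<in> Pset PM A B")
    case True
    then obtain w1 where w1: "(u, w1) \<in> A" "\<forall>w'. (u, w') \<in> B \<longrightarrow> (w1, w') \<in> PM u"
      unfolding Pset_def by blast
    have "(u, w1) \<in> mjoin PM A B" using w1(1) True unfolding mjoin_def by auto
    then show ?thesis using w1(2) uw by blast
  next
    case False
    have "(u, w) \<in> mjoin PM A B" using uw False unfolding mjoin_def by auto
    then show ?thesis by blast
  qed
qed

end

lemma L6:
  assumes stA: "stable_matching U Wa PM PW A" and stA': "stable_matching U Wa PM PW A'"
    and dom: "men_dominates U PM A' A" and finA: "finite A"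
  shows "card A' \<le> card A"
proof -
  have "snd ` A' \<subseteq> snd ` A"
  proof
    fix w assume "w \<in> snd ` A'"
    then obtain u where uw: "(u, w) \<in> A'" by force
    have uU: "u \<in> U" and wa: "w \<in> Wa" using uw stable_sub[OF stA'] by auto
    show "w \<in> snd ` A"
    proof (rule ccontr)
      assume n: "w \<notin> snd ` A"
      then have nA: "(u, w) \<notin> A" by force
      have mA: "\<forall>w'. (u, w') \<in> A \<longrightarrow> (w, w') \<in> PM u"
      proof (intro allI impI)
        fix w' assume w': "(u, w') \<in> A"
        then obtain w'' where "(u, w'') \<in> A'" "w'' = w' \<or> (w'', w') \<in> PM u"
          using dom uU unfolding men_dominates_def by blast
        then show "(w, w') \<in> PM u" using stable_men[OF stA' uw] w' nA by blast
      qed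
      have wA: "\<forall>u'. (u', w) \<in> A \<longrightarrow> (u, u') \<in> PW w" using n by force
      show False using stable_noblock[OF stA uU wa nA mA wA] .
    qed
  qed
  moreover have "card A' = card (snd ` A')"
    by (rule card_image[symmetric]) (auto simp: inj_on_def dest: stable_women[OF stA'])
  ultimately show ?thesis
    by (metis card_image_le card_mono finA finite_imageI le_trans)
qed

lemma L8:
  assumes WaWb: "Wa \<subseteq> Wb" and WbX: "Wb \<subseteq> X" and finWb: "finite Wb"
    and stA: "stable_matching U Wa PM PW A" and stA': "stable_matching U Wa PM PW A'"
    and stB: "stable_matching U Wb PM PW B"
    and dom: "men_dominates U PM A' A"
  shows "card (A' - mjoin PM A' B) \<le> card (A - B)"
proof -
  let ?B' = "mjoin PM A' B"
  have finA: "finite A" using stable_sub[OF stA] finU finWb WaWb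
    by (meson finite_SigmaI finite_subset)
  have finA': "finite A'" using stable_sub[OF stA'] finU finWb WaWb
    by (meson finite_SigmaI finite_subset)
  have c1: "card A' \<le> card A" using L6[OF stA stA' dom finA] .
  have c2: "card (A \<inter> B) \<le> card (A' \<inter> ?B')"
  proof -
    have "fst ` (A \<inter> B) \<subseteq> fst ` (A' \<inter> ?B')"
    proof
      fix u assume "u \<in> fst ` (A \<inter> B)"
      then obtain w where uw: "(u, w) \<in> A" "(u, w) \<in> B" by force
      have uU: "u \<in> U" using uw stable_sub[OF stA] by auto
      obtain w' where w': "(u, w') \<in> A'" "w' = w \<or> (w', w) \<in> PM u"
        using dom uU uw(1) unfolding men_dominates_def by blast
      show "u \<in> fst ` (A' \<inter> ?B')"
      proof (cases "w' = w")
        case True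
        have "u \<notin> Pset PM A' B"
          using stable_men[OF stA' w'(1)] uw(2) True pm_irr[OF uU] unfolding Pset_def by blast
        then have "(u, w) \<in> ?B'" using uw(2) unfolding mjoin_def by auto
        then show ?thesis using w'(1) True by force
      next
        case False
        then have "(w', w) \<in> PM u" using w' by blast
        then have "u \<in> Pset PM A' B"
          using w'(1) stable_men[OF stB uw(2)] unfolding Pset_def by blast
        then have "(u, w') \<in> ?B'" using w'(1) unfolding mjoin_def by auto
        then show ?thesis using w'(1) by force
      qed
    qed
    moreover have "card (fst ` (A \<inter> B)) = card (A \<inter> B)"
      by (rule card_image) (auto simp: inj_on_def dest: stable_men[OF stA])
    moreover have "card (fst ` (A' \<inter> ?B')) \<le> card (A' \<inter> ?B')"
      using finA' by (simp add: card_image_le)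
    moreover have "finite (fst ` (A' \<inter> ?B'))" using finA' by simp
    ultimately show ?thesis by (metis card_mono le_trans)
  qed
  have c3: "card (A' \<inter> ?B') \<le> card A'" using finA' by (simp add: card_mono)
  have "card (A' - ?B') = card A' - card (A' \<inter> ?B')"
    using finA' by (simp add: card_Diff_subset_Int)
  moreover have "card (A - B) = card A - card (A \<inter> B)"
    using finA by (simp add: card_Diff_subset_Int)
  ultimately show ?thesis using c1 c2 c3 by linarith
qed

end

theorem lemma6:
  fixes T :: nat and U :: "'m set" and W :: "nat \<Rightarrow> 'w set"
    and PM :: "'m \<Rightarrow> ('w \<times> 'w) set" and PW :: "'w \<Rightarrow> ('m \<times> 'm) set"
    and M :: "nat \<Rightarrow> ('m \<times> 'w) set" and M1' :: "('m \<times> 'w) set"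
  assumes "T \<ge> 2"
    and "finite U"
    and "\<And>t. t \<in> {1..T} \<Longrightarrow> finite (W t)"
    and "\<And>t. t \<in> {1..<T} \<Longrightarrow> W t \<subseteq> W (Suc t)"
    and "\<And>u. u \<in> U \<Longrightarrow> strict_linear_order_on (W T) (PM u)"
    and "\<And>w. w \<in> W T \<Longrightarrow> strict_linear_order_on U (PW w)"
    and "\<And>t. t \<in> {1..T} \<Longrightarrow> stable_matching U (W t) PM PW (M t)"
    and "stable_matching U (W 1) PM PW M1'"
    and "men_dominates U PM M1' (M 1)"
  shows "\<exists>M'. M' 1 = M1' \<and> (\<forall>t\<in>{2..T}. stable_matching U (W t) PM PW (M' t)) \<and>
           (\<Sum>t\<in>{1..<T}. card (M' t - M' (Suc t))) \<le> (\<Sum>t\<in>{1..<T}. card (M t - M (Suc t)))"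
proof -
  interpret prefs U "W T" PM PW
  proof
    show "finite U" by fact
  next
    fix u a assume "u \<in> U" then show "(a, a) \<notin> PM u"
      using assms(5) unfolding strict_linear_order_on_def irrefl_def by blast
  next
    fix u a b c assume "u \<in> U" "(a, b) \<in> PM u" "(b, c) \<in> PM u" then show "(a, c) \<in> PM u"
      using assms(5) unfolding strict_linear_order_on_def trans_def by blast
  next
    fix u a b assume "u \<in> U" "a \<in> W T" "b \<in> W T" "a \<noteq> b"
    then show "(a, b) \<in> PM u \<or> (b, a) \<in> PM u"
      using assms(5) unfolding strict_linear_order_on_def total_on_def by blast
  next
    fix w a assume "w \<in> W T" then show "(a, a) \<notin> PW w"
      using assms(6) unfolding strict_linear_order_on_def irrefl_def by blast
  next
    fix w a b c assume "w \<in> W T" "(a, b) \<in> PW w" "(b, c) \<in> PW w" then show "(a, c) \<in> PW w"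
      using assms(6) unfolding strict_linear_order_on_def trans_def by blast
  next
    fix w a b assume "w \<in> W T" "a \<in> U" "b \<in> U" "a \<noteq> b"
    then show "(a, b) \<in> PW w \<or> (b, a) \<in> PW w"
      using assms(6) unfolding strict_linear_order_on_def total_on_def by blast
  qed
  have chain: "\<forall>t. 1 \<le> t \<and> t + k = T \<longrightarrow> W t \<subseteq> W T" for k
  proof (induction k)
    case 0 then show ?case by simp
  next
    case (Suc k)
    show ?case
    proof (intro allI impI)
      fix t assume h: "1 \<le> t \<and> t + Suc k = T"
      then have "W (Suc t) \<subseteq> W T" using Suc.IH[rule_format, of "Suc t"] by simp
      moreover have "W t \<subseteq> W (Suc t)" using assms(4)[of t] h by simp
      ultimately show "W t \<subseteq> W T" by (rule subset_trans[rotated])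
    qed
  qed
  have WX: "W t \<subseteq> W T" if "1 \<le> t" "t \<le> T" for t
    using chain[of "T - t"] that by simp
  define S where "S = seqM PM M1' M"
  have S_Suc: "S (Suc n) = mjoin PM (S n) (M (Suc (Suc n)))" for n
    unfolding S_def by simp
  have inv: "Suc n \<le> T \<longrightarrow> stable_matching U (W (Suc n)) PM PW (S n) \<and> men_dominates U PM (S n) (M (Suc n))" for n
  proof (induction n)
    case 0 then show ?case using assms(8,9) by (simp add: S_def)
  next
    case (Suc n)
    show ?case
    proof
      assume le: "Suc (Suc n) \<le> T"
      have IH: "stable_matching U (W (Suc n)) PM PW (S n)" using Suc le by simp
      have stB: "stable_matching U (W (Suc (Suc n))) PM PW (M (Suc (Suc n)))" using assms(7) le by simp
      have s1: "W (Suc n) \<subseteq> W (Suc (Suc n))" using assms(4)[of "Suc n"] le by simp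
      have s2: "W (Suc (Suc n)) \<subseteq> W T" using WX le by simp
      have f: "finite (W (Suc (Suc n)))" using assms(3) le by simp
      show "stable_matching U (W (Suc (Suc n))) PM PW (S (Suc n)) \<and> men_dominates U PM (S (Suc n)) (M (Suc (Suc n)))"
        unfolding S_Suc using L3[OF s1 s2 f IH stB] L5[OF s1 s2 f IH stB] by simp
    qed
  qed
  define M' where "M' = (\<lambda>t. S (t - 1))"
  have "M' 1 = M1'" by (simp add: M'_def S_def)
  moreover have "\<forall>t\<in>{2..T}. stable_matching U (W t) PM PW (M' t)"
  proof
    fix t assume "t \<in> {2..T}"
    then show "stable_matching U (W t) PM PW (M' t)" using inv[of "t - 1"] by (simp add: M'_def)
  qed
  moreover have "(\<Sum>t\<in>{1..<T}. card (M' t - M' (Suc t))) \<le> (\<Sum>t\<in>{1..<T}. card (M t - M (Suc t)))"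
  proof (rule sum_mono)
    fix t assume t: "t \<in> {1..<T}"
    then obtain n where n: "t = Suc n" by (cases t) auto
    have le: "Suc (Suc n) \<le> T" using t n by simp
    have IH: "stable_matching U (W (Suc n)) PM PW (S n)" "men_dominates U PM (S n) (M (Suc n))"
      using inv[of n] le by auto
    have stA: "stable_matching U (W (Suc n)) PM PW (M (Suc n))" using assms(7) le by simp
    have stB: "stable_matching U (W (Suc (Suc n))) PM PW (M (Suc (Suc n)))" using assms(7) le by simp
    have s1: "W (Suc n) \<subseteq> W (Suc (Suc n))" using assms(4)[of "Suc n"] le by simp
    have s2: "W (Suc (Suc n)) \<subseteq> W T" using WX le by simp
    have f: "finite (W (Suc (Suc n)))" using assms(3) le by simp
    have "card (S n - mjoin PM (S n) (M (Suc (Suc n)))) \<le> card (M (Suc n) - M (Suc (Suc n)))"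
      using L8[OF s1 s2 f stA IH(1) stB IH(2)] .
    then show "card (M' t - M' (Suc t)) \<le> card (M t - M (Suc t))"
      by (simp add: M'_def n S_Suc)
  qed
  ultimately show ?thesis by blast
qed

end
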